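(* Let $G$ be a connected graph with infinitely many nodes such that ${}^{*}G$ has a hypernode not in its principal galaxy $\Gamma_0$. Let $\Gamma_a,\Gamma_b,\Gamma_c$ be galaxies of ${}^{*}G$ different from $\Gamma_0$. If $\Gamma_a$ is closer to $\Gamma_0$ than is $\Gamma_b$, and $\Gamma_b$ is closer to $\Gamma_0$ than is $\Gamma_c$, then $\Gamma_a$ is closer to $\Gamma_0$ than is $\Gamma_c$. Thus the set of galaxies is partially ordered according to closeness to $\Gamma_0$.
   Context: Conventions. $G=\{X,B\}$ is a graph whose branches are two-element subsets of $X$, and $d$ is the graph distance. Fix a free ultrafilter $\mathcal F$ on $\mathbb N$. Hypernodes and enlargement. Hypernodes are classes $[x_n]$ of node sequences, with two sequences identified when they agree on a set in $\mathcal F$. A standard hypernode is the class of a constant sequence. ${}^{*}G$ consists of the hypernodes and the hyperbranches $[\{x_n,y_n\}]$ with $\{n:\{x_n,y_n\}\in B\}\in\mathcal F$. Galaxies. Hypernodes $[x_n]$ and $[y_n]$ are limitedly distant if $\{n:d(x_n,y_n)\le k\}\in\mathcal F$ for some $k\in\mathbb N$. Galaxies are the classes of this equivalence relation, together with the hyperbranches between their hypernodes. The principal galaxy $\Gamma_0$ contains the standard hypernodes. Closeness. For galaxies $\Gamma_a,\Gamma_b\ne\Gamma_0$, $\Gamma_a$ is closer to $\Gamma_0$ than is $\Gamma_b$ if there exist ${\bf y}=[y_n]\in\Gamma_a$, ${\bf z}=[z_n]\in\Gamma_b$ and ${\bf x}=[x_n]\in\Gamma_0$ such that for every $m\in\mathbb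 N$, $\{n: d(z_n,x_n)-d(y_n,x_n)\ge m\}\in\mathcal F$. *)

theory Defs
  imports Main
begin

definition is_graph :: "'a set \<Rightarrow> 'a set set \<Rightarrow> bool" where
  "is_graph X B \<longleftrightarrow> (\<forall>e\<in>B. \<exists>u v. e = {u, v} \<and> u \<noteq> v \<and> u \<in> X \<and> v \<in> X)"

text \<open>A walk of length k from u to v: a list of k+1 nodes, consecutive ones joined by a branch.\<close>
definition is_walk :: "'a set \<Rightarrow> 'a set set \<Rightarrow> 'a list \<Rightarrow> 'a \<Rightarrow> 'a \<Rightarrow> bool" where
  "is_walk X B p u v \<longleftrightarrow> p \<noteq> [] \<and> hd p = u \<and> last p = v \<and> set p \<subseteq> X \<and>
     (\<forall>i. Suc i < length p \<longrightarrow> {p ! i, p ! Suc i} \<in> B)"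

definition connected_graph :: "'a set \<Rightarrow> 'a set set \<Rightarrow> bool" where
  "connected_graph X B \<longleftrightarrow> (\<forall>u\<in>X. \<forall>v\<in>X. \<exists>p. is_walk X B p u v)"

definition gdist :: "'a set \<Rightarrow> 'a set set \<Rightarrow> 'a \<Rightarrow> 'a \<Rightarrow> nat" where
  "gdist X B u v = (LEAST k. \<exists>p. is_walk X B p u v \<and> length p = Suc k)"

definition free_ultrafilter :: "nat filter \<Rightarrow> bool" where
  "free_ultrafilter F \<longleftrightarrow> F \<noteq> bot \<and> (\<forall>P. eventually P F \<or> eventually (\<lambda>n. \<not> P n) F)
     \<and> F \<le> cofinite"

text \<open>Representatives of hypernodes: sequences of nodes (hypernodes are their classes
  modulo F-a.e. equality; all notions below respect that equivalence).\<close>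
definition node_seq :: "'a set \<Rightarrow> (nat \<Rightarrow> 'a) \<Rightarrow> bool" where
  "node_seq X x \<longleftrightarrow> (\<forall>n. x n \<in> X)"

definition limitedly_distant ::
  "'a set \<Rightarrow> 'a set set \<Rightarrow> nat filter \<Rightarrow> (nat \<Rightarrow> 'a) \<Rightarrow> (nat \<Rightarrow> 'a) \<Rightarrow> bool" where
  "limitedly_distant X B F x y \<longleftrightarrow> (\<exists>k::nat. eventually (\<lambda>n. gdist X B (x n) (y n) \<le> k) F)"

text \<open>The galaxy of the hypernode [x], as the set of representatives of its hypernodes.\<close>
definition galaxy :: "'a set \<Rightarrow> 'a set set \<Rightarrow> nat filter \<Rightarrow> (nat \<Rightarrow> 'a) \<Rightarrow> (nat \<Rightarrow> 'a) set" where
  "galaxy X B F x = {y. node_seq X y \<and> limitedly_distant X B F x y}"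

definition galaxies :: "'a set \<Rightarrow> 'a set set \<Rightarrow> nat filter \<Rightarrow> (nat \<Rightarrow> 'a) set set" where
  "galaxies X B F = {galaxy X B F x | x. node_seq X x}"

text \<open>Principal galaxy: the galaxy containing the standard hypernodes.\<close>
definition principal_galaxy :: "'a set \<Rightarrow> 'a set set \<Rightarrow> nat filter \<Rightarrow> (nat \<Rightarrow> 'a) set" where
  "principal_galaxy X B F = {y. node_seq X y \<and> (\<exists>c\<in>X. limitedly_distant X B F (\<lambda>_. c) y)}"

definition closer :: "'a set \<Rightarrow> 'a set set \<Rightarrow> nat filter \<Rightarrow> (nat \<Rightarrow> 'a) set \<Rightarrow> (nat \<Rightarrow> 'a) set \<Rightarrow> bool" where
  "closer X B F Ga Gb \<longleftrightarrow> (\<exists>y\<in>Ga. \<exists>z\<in>Gb. \<exists>x\<in>principal_galaxy X B F.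
     \<forall>m::nat. eventually (\<lambda>n. int (gdist X B (z n) (x n)) - int (gdist X B (y n) (x n)) \<ge> int m) F)"

end

theory Submission
  imports Defs
begin

lemma walk_Nil[simp]: "\<not> is_walk X B [] u v" by (simp add: is_walk_def)

lemma walk_single: "is_walk X B [a] u v \<longleftrightarrow> a = u \<and> a = v \<and> a \<in> X"
  by (auto simp: is_walk_def)

lemma walk_Cons2: "is_walk X B (a # b # q) u v \<longleftrightarrow>
   a = u \<and> a \<in> X \<and> {a, b} \<in> B \<and> is_walk X B (b # q) b v"
proof
  assume h: "is_walk X B (a # b # q) u v"
  then show "a = u \<and> a \<in> X \<and> {a, b} \<in> B \<and> is_walk X B (b # q) b v"
    unfolding is_walk_def
    by auto
next
  assume h: "a = u \<and> a \<in> X \<and> {a, b} \<in> B \<and> is_walk X B (b # q) b v"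
  show "is_walk X B (a # b # q) u v"
    unfolding is_walk_def
  proof (intro conjI allI impI)
    fix i assume i: "Suc i < length (a # b # q)"
    show "{(a # b # q) ! i, (a # b # q) ! Suc i} \<in> B"
    proof (cases i)
      case 0 then show ?thesis using h by auto
    next
      case (Suc j) then show ?thesis using h i unfolding is_walk_def by auto
    qed
  qed (use h in \<open>auto simp: is_walk_def\<close>)
qed

lemma walk_append: "is_walk X B p u v \<Longrightarrow> is_walk X B q v w \<Longrightarrow> is_walk X B (p @ tl q) u w"
proof (induction p arbitrary: u)
  case Nil then show ?case by simp
next
  case (Cons a p)
  show ?case
  proof (cases p)
    case Nil
    then have "a = u" "a = v" using Cons.prems by (auto simp: walk_single)
    then show ?thesis using Cons.prems Nil
      by (cases q) (auto simp: is_walk_def)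
  next
    case (Cons b r)
    then have "is_walk X B p b v" "a = u" "a \<in> X" "{a,b} \<in> B" using Cons.prems(1) by (auto simp: walk_Cons2)
    then have "is_walk X B (p @ tl q) b w" using Cons.IH Cons.prems(2) by blast
    then show ?thesis using Cons \<open>a = u\<close> \<open>a \<in> X\<close> \<open>{a,b} \<in> B\<close> by (simp add: walk_Cons2)
  qed
qed

lemma walk_rev: "is_walk X B p u v \<Longrightarrow> is_walk X B (rev p) v u"
proof (induction p arbitrary: u)
  case Nil then show ?case by simp
next
  case (Cons a p)
  show ?case
  proof (cases p)
    case Nil then show ?thesis using Cons.prems by (auto simp add: walk_single)
  next
    case (Cons b r)
    then have h: "is_walk X B p b v" "a = u" "a \<in> X" "{a,b} \<in> B" using Cons.prems(1) by (auto simp: walk_Cons2)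
    have w1: "is_walk X B (rev p) v b" using Cons.IH h by blast
    moreover have "b \<in> X" using h(1) Cons by (auto simp: is_walk_def)
    moreover have w2: "is_walk X B [b, a] b a" using h \<open>b \<in> X\<close>
      by (simp add: walk_Cons2 walk_single insert_commute)
    have "is_walk X B (rev p @ tl [b, a]) v a" by (rule walk_append[OF w1 w2])
    then show ?thesis using h by simp
  qed
qed

lemma gdist_le: "is_walk X B p u v \<Longrightarrow> gdist X B u v \<le> length p - 1"
  unfolding gdist_def by (rule Least_le) (cases p, auto)

lemma gdist_ex: assumes "connected_graph X B" "u \<in> X" "v \<in> X"
  shows "\<exists>p. is_walk X B p u v \<and> length p = Suc (gdist X B u v)"
proof -
  obtain p where "is_walk X B p u v" using assms unfolding connected_graph_def by blast
  then have "\<exists>k p. is_walk X B p u v \<and> length p = Suc k"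
    by (intro exI[of _ "length p - 1"] exI[of _ p]) (cases p, auto)
  then show ?thesis unfolding gdist_def by (rule LeastI_ex)
qed

lemma gdist_tri: assumes "connected_graph X B" "u \<in> X" "v \<in> X" "w \<in> X"
  shows "gdist X B u w \<le> gdist X B u v + gdist X B v w"
proof -
  obtain p where p: "is_walk X B p u v" "length p = Suc (gdist X B u v)" using gdist_ex assms by metis
  obtain q where q: "is_walk X B q v w" "length q = Suc (gdist X B v w)" using gdist_ex assms by metis
  have "is_walk X B (p @ tl q) u w" by (rule walk_append[OF p(1) q(1)])
  from gdist_le[OF this] show ?thesis using p q by simp
qed

lemma gdist_sym: assumes "connected_graph X B" "u \<in> X" "v \<in> X"
  shows "gdist X B u v = gdist X B v u"
proof -
  have *: "gdist X B a b \<le> gdist X B b a" if ab: "a \<in> X" "b \<in> X" for a b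
  proof -
    obtain p where p: "is_walk X B p b a" "length p = Suc (gdist X B b a)" using gdist_ex[OF assms(1) ab(2) ab(1)] by blast
    from gdist_le[OF walk_rev[OF p(1)]] show ?thesis using p by simp
  qed
  show ?thesis using *[of u v] *[of v u] assms by simp
qed

theorem theorem4p3:
  fixes X :: "'a set" and B :: "'a set set" and F :: "nat filter"
    and Ga Gb Gc :: "(nat \<Rightarrow> 'a) set"
  assumes "is_graph X B" and "connected_graph X B" and "infinite X"
    and "free_ultrafilter F"
    and "\<exists>x. node_seq X x \<and> x \<notin> principal_galaxy X B F"
    and "Ga \<in> galaxies X B F" and "Gb \<in> galaxies X B F" and "Gc \<in> galaxies X B F"
    and "Ga \<noteq> principal_galaxy X B F" and "Gb \<noteq> principal_galaxy X B F"
    and "Gc \<noteq> principal_galaxy X B F"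
    and "closer X B F Ga Gb" and "closer X B F Gb Gc"
  shows "closer X B F Ga Gc"
proof -
  note cg = assms(2)
  let ?d = "gdist X B"
  obtain y z x where y: "y \<in> Ga" and z: "z \<in> Gb" and x: "x \<in> principal_galaxy X B F"
    and H1: "\<forall>m::nat. eventually (\<lambda>n. int (?d (z n) (x n)) - int (?d (y n) (x n)) \<ge> int m) F"
    using assms(12) unfolding closer_def by blast
  obtain y' z' x' where y': "y' \<in> Gb" and z': "z' \<in> Gc" and x': "x' \<in> principal_galaxy X B F"
    and H2: "\<forall>m::nat. eventually (\<lambda>n. int (?d (z' n) (x' n)) - int (?d (y' n) (x' n)) \<ge> int m) F"
    using assms(13) unfolding closer_def by blast
  obtain wb where wb: "node_seq X wb" "Gb = galaxy X B F wb" using assms(7) unfolding galaxies_def by blast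
  obtain k1 where k1: "eventually (\<lambda>n. ?d (wb n) (z n) \<le> k1) F" and zX: "node_seq X z"
    using z wb unfolding galaxy_def limitedly_distant_def by blast
  obtain k2 where k2: "eventually (\<lambda>n. ?d (wb n) (y' n) \<le> k2) F" and y'X: "node_seq X y'"
    using y' wb unfolding galaxy_def limitedly_distant_def by blast
  obtain c k3 where c: "c \<in> X" and k3: "eventually (\<lambda>n. ?d c (x n) \<le> k3) F" and xX: "node_seq X x"
    using x unfolding principal_galaxy_def limitedly_distant_def by blast
  obtain c' k4 where c': "c' \<in> X" and k4: "eventually (\<lambda>n. ?d c' (x' n) \<le> k4) F" and x'X: "node_seq X x'"
    using x' unfolding principal_galaxy_def limitedly_distant_def by blast
  have yX: "node_seq X y" using y assms(6) unfolding galaxies_def galaxy_def by blast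
  have z'X: "node_seq X z'" using z' assms(8) unfolding galaxies_def galaxy_def by blast
  define E where "E = k3 + ?d c c' + k4"
  define K where "K = k1 + k2 + 2 * E"
  have "\<forall>m::nat. eventually (\<lambda>n. int (?d (z' n) (x n)) - int (?d (y n) (x n)) \<ge> int m) F"
  proof
    fix m :: nat
    have ev: "eventually (\<lambda>n. int (?d (z n) (x n)) - int (?d (y n) (x n)) \<ge> int 0 \<and>
       int (?d (z' n) (x' n)) - int (?d (y' n) (x' n)) \<ge> int (m + K) \<and>
       ?d (wb n) (z n) \<le> k1 \<and> ?d (wb n) (y' n) \<le> k2 \<and> ?d c (x n) \<le> k3 \<and> ?d c' (x' n) \<le> k4) F"
      using H1[rule_format, of 0] H2[rule_format, of "m+K"] k1 k2 k3 k4
      by (intro eventually_conj) (assumption+)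
    show "eventually (\<lambda>n. int (?d (z' n) (x n)) - int (?d (y n) (x n)) \<ge> int m) F"
    proof (rule eventually_mono[OF ev], elim conjE)
      fix n
      assume a1: "int (?d (z n) (x n)) - int (?d (y n) (x n)) \<ge> int 0"
        and a2: "int (?d (z' n) (x' n)) - int (?d (y' n) (x' n)) \<ge> int (m + K)"
        and b1: "?d (wb n) (z n) \<le> k1" and b2: "?d (wb n) (y' n) \<le> k2"
        and b3: "?d c (x n) \<le> k3" and b4: "?d c' (x' n) \<le> k4"
      have X: "x n \<in> X" "x' n \<in> X" "y n \<in> X" "y' n \<in> X" "z n \<in> X" "z' n \<in> X" "wb n \<in> X"
        using xX x'X yX y'X zX z'X wb(1) unfolding node_seq_def by auto
      have t1: "?d (z' n) (x' n) \<le> ?d (z' n) (x n) + ?d (x n) (x' n)" by (rule gdist_tri[OF cg X(6) X(1) X(2)])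
      have t2: "?d (x n) (x' n) \<le> ?d (x n) c + ?d c (x' n)" by (rule gdist_tri[OF cg X(1) c X(2)])
      have t3: "?d c (x' n) \<le> ?d c c' + ?d c' (x' n)" by (rule gdist_tri[OF cg c c' X(2)])
      have s1: "?d (x n) c = ?d c (x n)" by (rule gdist_sym[OF cg X(1) c])
      have t4: "?d (z n) (x n) \<le> ?d (z n) (y' n) + ?d (y' n) (x n)" by (rule gdist_tri[OF cg X(5) X(4) X(1)])
      have t5: "?d (y' n) (x n) \<le> ?d (y' n) (x' n) + ?d (x' n) (x n)" by (rule gdist_tri[OF cg X(4) X(2) X(1)])
      have s3: "?d (z n) (y' n) = ?d (y' n) (z n)" by (rule gdist_sym[OF cg X(5) X(4)])
      have s4: "?d (x' n) (x n) = ?d (x n) (x' n)" by (rule gdist_sym[OF cg X(2) X(1)])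
      have t6: "?d (y' n) (z n) \<le> ?d (y' n) (wb n) + ?d (wb n) (z n)" by (rule gdist_tri[OF cg X(4) X(7) X(5)])
      have s2: "?d (y' n) (wb n) = ?d (wb n) (y' n)" by (rule gdist_sym[OF cg X(4) X(7)])
      have e: "?d (x n) (x' n) \<le> E" using t2 t3 s1 b3 b4 unfolding E_def by linarith
      have f: "?d (y' n) (z n) \<le> k1 + k2" using t6 s2 b1 b2 by linarith
      have g: "?d (z n) (x n) \<ge> ?d (y n) (x n)" using a1 by linarith
      have a2': "?d (z' n) (x' n) \<ge> ?d (y' n) (x' n) + m + K" using a2 by linarith
      have "?d (z' n) (x n) \<ge> ?d (y n) (x n) + m"
        using e f g a2' t1 t4 t5 s3 s4 unfolding K_def by linarith
      then show "int (?d (z' n) (x n)) - int (?d (y n) (x n)) \<ge> int m" by linarith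
    qed
  qed
  then show ?thesis unfolding closer_def using y z' x by blast
qed

end
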